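(* Let $X$ be a finite nonempty set partitioned into nonempty classes $(C_j)_{j\in J}$, choose $r_j\in C_j$ for each $j$, and set $R=\{r_j:j\in J\}$, $I=X\setminus R$, $\mathcal A=\mathcal P(X)$. Choose weights $w_j\in\{0,1\}$ with $\sum_j w_j>0$ and define $\mu(B)=\sum_{j\in J:\,r_j\in B}w_j$ for $B\subseteq X$. Define $\Pi_R:X\to R$ by $\Pi_R(x)=r_j$ for $x\in C_j$, $G=\bigcup_{j\in J}(C_j\times C_j)$, $E_0=\mu(X)$, $\eta=0$, and let $\mu^{\otimes2}(S)=\sum_{(x,y)\in S}m(x)m(y)$ for $S\subseteq X\times X$, where $m(x)=\mu(\{x\})$. Then $(X,\mathcal A,\mu,\mu^{\otimes2},R,I,\Pi_R,G,E_0,\eta)$ is an admissible structural model. In particular, there exist finite admissible structural models in which $G$ is not contained in the diagonal (namely whenever some $C_j$ has more than one element).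
   Context: For relations, $H\circ K=\{(x,z):\exists y\,(x,y)\in H,(y,z)\in K\}$. An admissible structural model is a tuple $(X,\mathcal A,\mu,\mu^{\otimes2},R,I,\Pi_R,G,E_0,\eta)$ with $X$ nonempty, $\mathcal A$ an algebra on $X$, $\mu:\mathcal A\to[0,\infty)$ finitely additive, $\mu^{\otimes2}$ finitely additive on the product algebra with $\mu^{\otimes2}(B_1\times B_2)=\mu(B_1)\mu(B_2)$, $R,I\in\mathcal A$ disjoint, $\Pi_R:X\to R$, $G$ in the product algebra, $E_0>0$, $\eta\in[0,1]$, satisfying: Axiom I: $\Pi_R\circ\Pi_R=\Pi_R$, $\Pi_R|_R=\mathrm{id}_R$, $\Pi_R^{-1}(B)\in\mathcal A$ for measurable $B\subseteq R$; Axiom II: $G$ reflexive, symmetric, $G\circ G=G$; Axiom III: $\mu(R)+\mu(I)=E_0$, $\mu(\Pi_R^{-1}(B))=\mu(B)$ for measurable $B\subseteq R$, and for all $B\in\mathcal A$, $\mu^{\otimes2}((B\times X)\cap G)=\mu(B)+\eta\,\mu^{\otimes2}((\Pi_R^{-1}(B)\times X)\cap G)$. *)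

theory Defs
  imports "HOL-Analysis.Sigma_Algebra"
begin

definition fin_add_nonneg :: "'a set set \<Rightarrow> ('a set \<Rightarrow> real) \<Rightarrow> bool" where
  "fin_add_nonneg M f \<longleftrightarrow>
     f {} = 0 \<and> (\<forall>B\<in>M. 0 \<le> f B) \<and>
     (\<forall>A\<in>M. \<forall>B\<in>M. A \<inter> B = {} \<longrightarrow> f (A \<union> B) = f A + f B)"

definition prod_algebra :: "'a set \<Rightarrow> 'a set set \<Rightarrow> ('a \<times> 'a) set set" where
  "prod_algebra X A =
     \<Inter>{M. algebra (X \<times> X) M \<and> {B1 \<times> B2 | B1 B2. B1 \<in> A \<and> B2 \<in> A} \<subseteq> M}"

definition admissible_structural_model ::
  "'a set \<Rightarrow> 'a set set \<Rightarrow> ('a set \<Rightarrow> real) \<Rightarrow> (('a \<times> 'a) set \<Rightarrow> real) \<Rightarrow>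
   'a set \<Rightarrow> 'a set \<Rightarrow> ('a \<Rightarrow> 'a) \<Rightarrow> ('a \<times> 'a) set \<Rightarrow> real \<Rightarrow> real \<Rightarrow> bool" where
  "admissible_structural_model X A \<mu> \<mu>2 R I PiR G E0 \<eta> \<longleftrightarrow>
     X \<noteq> {} \<and> algebra X A \<and>
     fin_add_nonneg A \<mu> \<and>
     fin_add_nonneg (prod_algebra X A) \<mu>2 \<and>
     (\<forall>B1\<in>A. \<forall>B2\<in>A. \<mu>2 (B1 \<times> B2) = \<mu> B1 * \<mu> B2) \<and>
     R \<in> A \<and> I \<in> A \<and> R \<inter> I = {} \<and>
     (\<forall>x\<in>X. PiR x \<in> R) \<and>
     G \<in> prod_algebra X A \<and>
     E0 > 0 \<and> 0 \<le> \<eta> \<and> \<eta> \<le> 1 \<and>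
     (\<forall>x\<in>X. PiR (PiR x) = PiR x) \<and>
     (\<forall>x\<in>R. PiR x = x) \<and>
     (\<forall>B\<in>A. B \<subseteq> R \<longrightarrow> {x\<in>X. PiR x \<in> B} \<in> A) \<and>
     refl_on X G \<and> sym G \<and> G O G = G \<and>
     \<mu> R + \<mu> I = E0 \<and>
     (\<forall>B\<in>A. B \<subseteq> R \<longrightarrow> \<mu> {x\<in>X. PiR x \<in> B} = \<mu> B) \<and>
     (\<forall>B\<in>A. \<mu>2 ((B \<times> X) \<inter> G) =
                \<mu> B + \<eta> * \<mu>2 (({x\<in>X. PiR x \<in> B} \<times> X) \<inter> G))"

end

theory Submission
  imports Defs
begin

theorem proposition5p10:
  fixes X :: "'a set" and J :: "'j set" and C :: "'j \<Rightarrow> 'a set"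
    and r :: "'j \<Rightarrow> 'a" and w :: "'j \<Rightarrow> real"
    and \<mu> :: "'a set \<Rightarrow> real" and \<mu>2 :: "('a \<times> 'a) set \<Rightarrow> real"
    and PiR :: "'a \<Rightarrow> 'a" and R I :: "'a set" and G :: "('a \<times> 'a) set"
  assumes fin: "finite X" and ne: "X \<noteq> {}"
    and part_ne: "\<forall>j\<in>J. C j \<noteq> {}"
    and part_disj: "\<forall>i\<in>J. \<forall>j\<in>J. i \<noteq> j \<longrightarrow> C i \<inter> C j = {}"
    and part_cover: "(\<Union>j\<in>J. C j) = X"
    and rep: "\<forall>j\<in>J. r j \<in> C j"
    and R_def: "R = r ` J"
    and I_def: "I = X - R"
    and w01: "\<forall>j\<in>J. w j = 0 \<or> w j = 1"
    and wpos: "(\<Sum>j\<in>J. w j) > 0"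
    and mu_def: "\<forall>B. \<mu> B = (\<Sum>j\<in>{j\<in>J. r j \<in> B}. w j)"
    and Pi_def: "\<forall>x\<in>X. \<forall>j\<in>J. x \<in> C j \<longrightarrow> PiR x = r j"
    and G_def: "G = (\<Union>j\<in>J. C j \<times> C j)"
    and mu2_def: "\<forall>S. \<mu>2 S = (\<Sum>(x, y)\<in>S. \<mu> {x} * \<mu> {y})"
  shows "admissible_structural_model X (Pow X) \<mu> \<mu>2 R I PiR G (\<mu> X) 0
         \<and> ((\<exists>j\<in>J. \<exists>x\<in>C j. \<exists>y\<in>C j. x \<noteq> y) \<longrightarrow> \<not> G \<subseteq> Id)"
proof -
  have muB: "\<And>B. \<mu> B = (\<Sum>j\<in>{j\<in>J. r j \<in> B}. w j)" using mu_def by blast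
  have mu2S: "\<And>S. \<mu>2 S = (\<Sum>(x, y)\<in>S. \<mu> {x} * \<mu> {y})" using mu2_def by blast
  have CX: "\<And>j. j \<in> J \<Longrightarrow> C j \<subseteq> X" using part_cover by blast
  have rX: "\<And>j. j \<in> J \<Longrightarrow> r j \<in> X" using rep CX by blast
  have injr: "inj_on r J"
  proof (rule inj_onI)
    fix i j assume "i \<in> J" "j \<in> J" "r i = r j"
    then have "r i \<in> C i \<inter> C j" using rep by auto
    then show "i = j" using part_disj \<open>i \<in> J\<close> \<open>j \<in> J\<close> by blast
  qed
  have RX: "R \<subseteq> X" using R_def rX by blast
  have finJ: "finite J"
    using finite_imageD[OF finite_subset[OF _ fin] injr] RX R_def by blast
  have wnn: "\<And>j. j \<in> J \<Longrightarrow> 0 \<le> w j" using w01 by force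
  have munn: "\<And>B. 0 \<le> \<mu> B" unfolding muB by (rule sum_nonneg) (simp add: wnn)
  have f_r: "\<And>j. j \<in> J \<Longrightarrow> \<mu> {r j} = w j"
  proof -
    fix j assume j: "j \<in> J"
    have "{i\<in>J. r i \<in> {r j}} = {j}" using j injr by (auto dest: inj_onD)
    then show "\<mu> {r j} = w j" unfolding muB by simp
  qed
  have f_out: "\<And>x. x \<notin> r ` J \<Longrightarrow> \<mu> {x} = 0"
  proof -
    fix x assume "x \<notin> r ` J"
    then have e: "{i\<in>J. r i \<in> {x}} = {}" by auto
    show "\<mu> {x} = 0" by (simp only: muB e sum.empty)
  qed
  have f01: "\<And>x. \<mu> {x} * \<mu> {x} = \<mu> {x}"
  proof -
    fix x show "\<mu> {x} * \<mu> {x} = \<mu> {x}"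
    proof (cases "x \<in> r ` J")
      case True
      then obtain j where "j \<in> J" "x = r j" by blast
      then show ?thesis using f_r w01 by force
    next
      case False then show ?thesis using f_out by simp
    qed
  qed
  have sumf: "\<And>B. B \<subseteq> X \<Longrightarrow> (\<Sum>x\<in>B. \<mu> {x}) = \<mu> B"
  proof -
    fix B assume B: "B \<subseteq> X"
    have "\<mu> B = (\<Sum>j\<in>{j\<in>J. r j \<in> B}. \<mu> {r j})" unfolding muB[of B] using f_r by simp
    also have "\<dots> = (\<Sum>x\<in>r ` {j\<in>J. r j \<in> B}. \<mu> {x})"
      by (rule sum.reindex[symmetric, unfolded comp_def]) (rule inj_on_subset[OF injr], auto)
    also have "\<dots> = (\<Sum>x\<in>B. \<mu> {x})"
      by (rule sum.mono_neutral_left) (use B fin finite_subset in \<open>auto intro: f_out\<close>)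
    finally show "(\<Sum>x\<in>B. \<mu> {x}) = \<mu> B" by simp
  qed
  have "\<forall>x\<in>X. \<exists>j. j \<in> J \<and> x \<in> C j" using part_cover by blast
  then obtain cls where cls0: "\<forall>x\<in>X. cls x \<in> J \<and> x \<in> C (cls x)"
    using bchoice[of X "\<lambda>x j. j \<in> J \<and> x \<in> C j"] by blast
  have cls: "\<And>x. x \<in> X \<Longrightarrow> cls x \<in> J \<and> x \<in> C (cls x)" using cls0 by blast
  have Pi: "\<And>x. x \<in> X \<Longrightarrow> PiR x = r (cls x)" using Pi_def cls by blast
  have Pir: "\<And>j. j \<in> J \<Longrightarrow> PiR (r j) = r j" using Pi_def rX rep by blast
  have PA_sub: "prod_algebra X (Pow X) \<subseteq> Pow (X \<times> X)"
    unfolding prod_algebra_def using algebra_Pow[of "X \<times> X"] by blast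
  have GX: "G \<subseteq> X \<times> X" using G_def CX by blast
  have G_PA: "G \<in> prod_algebra X (Pow X)"
    unfolding prod_algebra_def
  proof (rule InterI, safe)
    fix M assume M: "algebra (X \<times> X) M" "{B1 \<times> B2 |B1 B2. B1 \<in> Pow X \<and> B2 \<in> Pow X} \<subseteq> M"
    interpret algebra "X \<times> X" M by fact
    have "(\<Union>j\<in>J. C j \<times> C j) \<in> M"
      by (rule finite_UN[OF finJ]) (use M(2) CX in blast)
    then show "G \<in> M" using G_def by simp
  qed
  have Gsub: "\<And>x y. (x, y) \<in> G \<Longrightarrow> \<exists>j\<in>J. x \<in> C j \<and> y \<in> C j" using G_def by blast
  have GOG: "G O G = G"
  proof
    show "G O G \<subseteq> G"
    proof
      fix p assume "p \<in> G O G"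
      then obtain x y z where p: "p = (x, z)" "(x, y) \<in> G" "(y, z) \<in> G" by blast
      then obtain i k where "i \<in> J" "x \<in> C i" "y \<in> C i" "k \<in> J" "y \<in> C k" "z \<in> C k"
        using Gsub by meson
      then have "i = k" using part_disj by blast
      then show "p \<in> G" using p G_def \<open>i \<in> J\<close> \<open>x \<in> C i\<close> \<open>z \<in> C k\<close> by blast
    qed
  next
    show "G \<subseteq> G O G"
    proof
      fix p assume p: "p \<in> G"
      then obtain x y where xy: "p = (x, y)" by (cases p)
      then have "(y, y) \<in> G" using p GX cls G_def by blast
      then show "p \<in> G O G" using p xy by blast
    qed
  qed
  have reflG: "refl_on X G"
    unfolding refl_on_def using GX cls G_def by blast
  have symG: "sym G" unfolding sym_def G_def by blast
  have mu_add: "fin_add_nonneg (Pow X) \<mu>"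
    unfolding fin_add_nonneg_def
  proof (intro conjI ballI impI)
    show "\<mu> {} = 0" unfolding muB by simp
  next
    fix B show "0 \<le> \<mu> B" by (rule munn)
  next
    fix A B assume AB: "A \<in> Pow X" "B \<in> Pow X" "A \<inter> B = {}"
    have "{j\<in>J. r j \<in> A \<union> B} = {j\<in>J. r j \<in> A} \<union> {j\<in>J. r j \<in> B}" by auto
    moreover have "{j\<in>J. r j \<in> A} \<inter> {j\<in>J. r j \<in> B} = {}" using AB by auto
    ultimately show "\<mu> (A \<union> B) = \<mu> A + \<mu> B" unfolding muB
      by (simp add: sum.union_disjoint finJ)
  qed
  have mu2_add: "fin_add_nonneg (prod_algebra X (Pow X)) \<mu>2"
    unfolding fin_add_nonneg_def
  proof (intro conjI ballI impI)
    show "\<mu>2 {} = 0" unfolding mu2S by simp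
  next
    fix B show "0 \<le> \<mu>2 B" unfolding mu2S
      by (rule sum_nonneg) (auto simp: munn)
  next
    fix A B assume AB: "A \<in> prod_algebra X (Pow X)" "B \<in> prod_algebra X (Pow X)" "A \<inter> B = {}"
    have "finite A" "finite B" using AB PA_sub finite_subset[OF _ finite_cartesian_product[OF fin fin]] by blast+
    then show "\<mu>2 (A \<union> B) = \<mu>2 A + \<mu>2 B" unfolding mu2S
      using AB(3) by (simp add: sum.union_disjoint)
  qed
  have rect: "\<forall>B1\<in>Pow X. \<forall>B2\<in>Pow X. \<mu>2 (B1 \<times> B2) = \<mu> B1 * \<mu> B2"
  proof (intro ballI)
    fix B1 B2 assume B: "B1 \<in> Pow X" "B2 \<in> Pow X"
    have "\<mu> B1 * \<mu> B2 = (\<Sum>x\<in>B1. \<mu> {x}) * (\<Sum>y\<in>B2. \<mu> {y})" using sumf B by simp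
    also have "\<dots> = (\<Sum>x\<in>B1. \<Sum>y\<in>B2. \<mu> {x} * \<mu> {y})" by (rule sum_product)
    also have "\<dots> = (\<Sum>(x, y)\<in>B1 \<times> B2. \<mu> {x} * \<mu> {y})" by (rule sum.cartesian_product)
    finally show "\<mu>2 (B1 \<times> B2) = \<mu> B1 * \<mu> B2" unfolding mu2S by simp
  qed
  have E0: "\<mu> X > 0"
  proof -
    have "{j\<in>J. r j \<in> X} = J" using rX by blast
    then show ?thesis unfolding muB using wpos by simp
  qed
  have RI: "\<mu> R + \<mu> I = \<mu> X"
  proof -
    have "\<mu> (R \<union> I) = \<mu> R + \<mu> I" using mu_add RX I_def unfolding fin_add_nonneg_def by blast
    moreover have "R \<union> I = X" using RX I_def by blast
    ultimately show ?thesis by simp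
  qed
  have pre: "\<forall>B\<in>Pow X. B \<subseteq> R \<longrightarrow> \<mu> {x\<in>X. PiR x \<in> B} = \<mu> B"
  proof (intro ballI impI)
    fix B assume "B \<in> Pow X" "B \<subseteq> R"
    have "{j\<in>J. r j \<in> {x\<in>X. PiR x \<in> B}} = {j\<in>J. r j \<in> B}" using rX Pir by auto
    then show "\<mu> {x\<in>X. PiR x \<in> B} = \<mu> B" unfolding muB by simp
  qed
  have last: "\<forall>B\<in>Pow X. \<mu>2 ((B \<times> X) \<inter> G) = \<mu> B + 0 * \<mu>2 (({x\<in>X. PiR x \<in> B} \<times> X) \<inter> G)"
  proof (intro ballI)
    fix B assume B: "B \<in> Pow X"
    let ?S = "(B \<times> X) \<inter> G"
    let ?D = "(\<lambda>x. (x, x)) ` B"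
    have finS: "finite ?S" using GX finite_subset[OF _ finite_cartesian_product[OF fin fin]] by blast
    have DS: "?D \<subseteq> ?S" using B cls G_def by blast
    have zero: "\<forall>p\<in>?S - ?D. (case p of (x, y) \<Rightarrow> \<mu> {x} * \<mu> {y}) = 0"
    proof
      fix p assume p: "p \<in> ?S - ?D"
      then obtain x y where xy: "p = (x, y)" by (cases p)
      with p have "x \<noteq> y" "(x, y) \<in> G" using B by auto
      then obtain j where j: "j \<in> J" "x \<in> C j" "y \<in> C j" using Gsub by blast
      show "(case p of (x, y) \<Rightarrow> \<mu> {x} * \<mu> {y}) = 0"
      proof (cases "x \<in> r ` J \<and> y \<in> r ` J")
        case True
        then obtain i k where ik: "i \<in> J" "k \<in> J" "x = r i" "y = r k" by blast
        then have "i = j" "k = j" using j rep part_disj by blast+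
        then show ?thesis using ik \<open>x \<noteq> y\<close> by simp
      next
        case False then show ?thesis using f_out xy by auto
      qed
    qed
    have "\<mu>2 ?S = (\<Sum>p\<in>?D. (case p of (x, y) \<Rightarrow> \<mu> {x} * \<mu> {y}))"
      unfolding mu2S by (rule sum.mono_neutral_right[OF finS DS zero])
    also have "\<dots> = (\<Sum>x\<in>B. \<mu> {x} * \<mu> {x})"
      by (subst sum.reindex) (auto intro: inj_onI)
    also have "\<dots> = (\<Sum>x\<in>B. \<mu> {x})" by (rule sum.cong[OF refl]) (rule f01)
    also have "\<dots> = \<mu> B" using sumf B by blast
    finally show "\<mu>2 ?S = \<mu> B + 0 * \<mu>2 (({x\<in>X. PiR x \<in> B} \<times> X) \<inter> G)" by simp
  qed
  have part1: "admissible_structural_model X (Pow X) \<mu> \<mu>2 R I PiR G (\<mu> X) 0"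
    unfolding admissible_structural_model_def
    apply (intro conjI)
                        apply (rule ne)
                       apply (rule algebra_Pow)
                      apply (rule mu_add)
                     apply (rule mu2_add)
                    apply (rule rect)
                   using RX apply simp
                  using I_def apply simp
                 using I_def apply blast
                using Pi cls R_def apply auto[1]
               apply (rule G_PA)
              apply (rule E0)
             apply simp
            apply simp
           using Pi cls Pir apply auto[1]
          using R_def Pir apply auto[1]
         apply auto[1]
        apply (rule reflG)
       apply (rule symG)
      apply (rule GOG)
     apply (rule RI)
    apply (rule pre)
   apply (rule last)
  done
  have part2: "(\<exists>j\<in>J. \<exists>x\<in>C j. \<exists>y\<in>C j. x \<noteq> y) \<longrightarrow> \<not> G \<subseteq> Id"
    using G_def by blast
  show ?thesis using part1 part2 by blast
qed

end
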